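(* For each $d\ge 4$, there are at least $2^{d-3}$ finitely constrained subgroups of $\mathrm{Aut}(X^* )$ defined by patterns of size $d$ with Hausdorff dimension $1-\frac{2}{2^{d-1}}$ that are not topologically finitely generated.
   Context: Let $X=\{0,1\}$, $X^*$ the rooted binary tree of finite words, $G=\mathrm{Aut}(X^* )$, $G(d)$ the automorphism group of the finite tree of words of length $\le d$. Sections $g(wv)=g(w)g_w(v)$; $\pi_k$ restriction to words of length $\le k$. A subgroup $P\le G(d)$ is an essential pattern group if for every $p\in P$ and $i\in\{0,1\}$ there is $q\in P$ with $\pi_{d-1}(q)=p_i$; $G_P=\{g\in G:\pi_d(g_w)\in P\ \forall w\}$. A subgroup is finitely constrained if it equals some $G_P$, and defined by patterns of size $d$ if $d$ is the minimal such size. $\mathrm{Hdim}(K)=\liminf_n\log_2|K(n)|/\log_2|G(n)|$ with $K(n)=\pi_n(K)$. A closed subgroup is topologically finitely generated if it contains a finitely generated subgroup dense in the profinite topology. *)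

theory Defs
  imports Complex_Main "HOL-Library.Sublist" "HOL-Library.Liminf_Limsup" "HOL-Library.Extended_Real"
begin

text \<open>Vertices of the rooted binary tree X* are words over X = {0,1}, modelled as bool lists.\<close>

definition tree_aut :: "(bool list \<Rightarrow> bool list) \<Rightarrow> bool" where
  "tree_aut g \<longleftrightarrow> bij g \<and> (\<forall>w. length (g w) = length w)
     \<and> (\<forall>u v. prefix u v \<longrightarrow> prefix (g u) (g v))"

definition AutT :: "(bool list \<Rightarrow> bool list) set" where
  "AutT = {g. tree_aut g}"

text \<open>Automorphisms of the finite tree of words of length at most d, extended by the identity.\<close>
definition fin_aut :: "nat \<Rightarrow> (bool list \<Rightarrow> bool list) \<Rightarrow> bool" where
  "fin_aut d h \<longleftrightarrow> bij h \<and> (\<forall>w. length (h w) = length w)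
     \<and> (\<forall>w. d < length w \<longrightarrow> h w = w)
     \<and> (\<forall>u v. length v \<le> d \<longrightarrow> prefix u v \<longrightarrow> prefix (h u) (h v))"

definition AutD :: "nat \<Rightarrow> (bool list \<Rightarrow> bool list) set" where
  "AutD d = {h. fin_aut d h}"

definition proj :: "nat \<Rightarrow> (bool list \<Rightarrow> bool list) \<Rightarrow> (bool list \<Rightarrow> bool list)" where
  "proj k g = (\<lambda>w. if length w \<le> k then g w else w)"

text \<open>Section g_w, defined by g(wv) = g(w) g_w(v).\<close>
definition sect :: "(bool list \<Rightarrow> bool list) \<Rightarrow> bool list \<Rightarrow> (bool list \<Rightarrow> bool list)" where
  "sect g w = (\<lambda>v. drop (length w) (g (w @ v)))"

definition is_subgroup_of :: "(bool list \<Rightarrow> bool list) set \<Rightarrow> (bool list \<Rightarrow> bool list) set \<Rightarrow> bool" where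
  "is_subgroup_of H A \<longleftrightarrow> H \<subseteq> A \<and> id \<in> H \<and> (\<forall>p\<in>H. \<forall>q\<in>H. p \<circ> q \<in> H) \<and> (\<forall>p\<in>H. inv p \<in> H)"

text \<open>Essential pattern group of size d; the section p_i of p in G(d) is pi_{d-1}(p_[i]).\<close>
definition essential_pattern_group :: "nat \<Rightarrow> (bool list \<Rightarrow> bool list) set \<Rightarrow> bool" where
  "essential_pattern_group d P \<longleftrightarrow> is_subgroup_of P (AutD d) \<and>
     (\<forall>p\<in>P. \<forall>i::bool. \<exists>q\<in>P. proj (d - 1) q = proj (d - 1) (sect p [i]))"

definition GP :: "nat \<Rightarrow> (bool list \<Rightarrow> bool list) set \<Rightarrow> (bool list \<Rightarrow> bool list) set" where
  "GP d P = {g \<in> AutT. \<forall>w. proj d (sect g w) \<in> P}"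

definition constrained_by_size :: "nat \<Rightarrow> (bool list \<Rightarrow> bool list) set \<Rightarrow> bool" where
  "constrained_by_size d K \<longleftrightarrow> (\<exists>P. essential_pattern_group d P \<and> K = GP d P)"

definition finitely_constrained :: "(bool list \<Rightarrow> bool list) set \<Rightarrow> bool" where
  "finitely_constrained K \<longleftrightarrow> (\<exists>d. constrained_by_size d K)"

definition defined_by_patterns_of_size :: "nat \<Rightarrow> (bool list \<Rightarrow> bool list) set \<Rightarrow> bool" where
  "defined_by_patterns_of_size d K \<longleftrightarrow> constrained_by_size d K \<and> (\<forall>d'<d. \<not> constrained_by_size d' K)"

definition Hdim :: "(bool list \<Rightarrow> bool list) set \<Rightarrow> ereal" where
  "Hdim K = liminf (\<lambda>n. ereal (log 2 (real (card (proj n ` K))) / log 2 (real (card (AutD n)))))"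

inductive_set gen_subgroup :: "(bool list \<Rightarrow> bool list) set \<Rightarrow> (bool list \<Rightarrow> bool list) set"
  for S where
    gen_id: "id \<in> gen_subgroup S"
  | gen_base: "s \<in> S \<Longrightarrow> s \<in> gen_subgroup S"
  | gen_comp: "p \<in> gen_subgroup S \<Longrightarrow> q \<in> gen_subgroup S \<Longrightarrow> p \<circ> q \<in> gen_subgroup S"
  | gen_inv: "p \<in> gen_subgroup S \<Longrightarrow> inv p \<in> gen_subgroup S"

text \<open>H is dense in K for the profinite topology: every basic (cylinder) neighbourhood
  {h. proj n h = proj n g} of a point g of K meets H.\<close>
definition dense_in :: "(bool list \<Rightarrow> bool list) set \<Rightarrow> (bool list \<Rightarrow> bool list) set \<Rightarrow> bool" where
  "dense_in H K \<longleftrightarrow> (\<forall>g\<in>K. \<forall>n. \<exists>h\<in>H. proj n h = proj n g)"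

definition top_fin_gen :: "(bool list \<Rightarrow> bool list) set \<Rightarrow> bool" where
  "top_fin_gen K \<longleftrightarrow> (\<exists>S. finite S \<and> S \<subseteq> K \<and> gen_subgroup S \<subseteq> K \<and> dense_in (gen_subgroup S) K)"

end

theory Submission
  imports Defs
begin
fun port :: "(bool list \<Rightarrow> bool) \<Rightarrow> bool list \<Rightarrow> bool list" where
  "port a [] = []"
| "port a (x#w) = (x \<noteq> a []) # port (\<lambda>u. a (x#u)) w"

lemma port_length[simp]: "length (port a w) = length w"
  by (induct w arbitrary: a) auto

lemma port_append: "port a (u@v) = port a u @ port (\<lambda>y. a (u@y)) v"
  by (induct u arbitrary: a) auto

lemma port_snoc: "port a (w@[x]) = port a w @ [x \<noteq> a w]"
  by (simp add: port_append)

lemma port_inj_aux: "port a u = port a v \<Longrightarrow> u = v"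
proof (induct u arbitrary: a v)
  case Nil then show ?case by (cases v) auto
next
  case (Cons x u)
  show ?case
  proof (cases v)
    case Nil then show ?thesis using Cons by auto
  next
    case (Cons y v')
    have eq: "(x \<noteq> a []) = (y \<noteq> a [])" and eq2: "port (\<lambda>t. a (x#t)) u = port (\<lambda>t. a (y#t)) v'"
      using Cons.prems Cons by simp_all
    from eq have xy: "x = y" by (cases x; cases y) auto
    then show ?thesis using Cons.hyps[OF eq2[unfolded xy]] Cons xy by simp
  qed
qed

lemma port_inj: "inj (port a)"
  by (meson injI port_inj_aux)

lemma port_surj_aux: "\<exists>w. port a w = y"
proof (induct y arbitrary: a)
  case Nil then show ?case by (intro exI[of _ "[]"]) simp
next
  case (Cons z y)
  obtain w where "port (\<lambda>u. a ((z \<noteq> a []) # u)) w = y" using Cons by blast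
  then show ?case by (intro exI[of _ "(z \<noteq> a []) # w"]) auto
qed

lemma port_surj: "surj (port a)"
  by (metis port_surj_aux surjI)

lemma port_bij: "bij (port a)"
  by (simp add: bij_def port_inj port_surj)

lemma port_tree_aut: "tree_aut (port a)"
  unfolding tree_aut_def
  by (auto simp: port_bij prefix_def port_append)

definition lab :: "(bool list \<Rightarrow> bool list) \<Rightarrow> bool list \<Rightarrow> bool" where
  "lab g u = g (u @ [False]) ! length u"

lemma lab_port[simp]: "lab (port a) = a"
  by (rule ext) (simp add: lab_def port_snoc nth_append)

lemma tree_aut_snoc:
  assumes "tree_aut g"
  shows "g (w @ [x]) = g w @ [x \<noteq> lab g w]"
proof -
  have pre: "\<And>y. g (w@[y]) = g w @ [g (w@[y]) ! length w]"
  proof -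
    fix y
    have "prefix (g w) (g (w@[y]))" using assms unfolding tree_aut_def by auto
    then obtain r where r: "g (w@[y]) = g w @ r" by (auto simp: prefix_def)
    have "length (g (w@[y])) = length w + 1" "length (g w) = length w"
      using assms unfolding tree_aut_def by auto
    with r have "length r = 1" by simp
    then obtain c where "r = [c]" by (cases r) auto
    with r show "g (w@[y]) = g w @ [g (w@[y]) ! length w]"
      using \<open>length (g w) = length w\<close> by (simp add: nth_append)
  qed
  have injg: "inj g" using assms unfolding tree_aut_def bij_def by auto
  have ne: "g (w@[True]) \<noteq> g (w@[False])" using injg by (auto dest: injD)
  show ?thesis
  proof (cases x)
    case False then show ?thesis using pre[of False] by (simp add: lab_def)
  next
    case True
    have "g (w@[True]) ! length w \<noteq> g (w@[False]) ! length w"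
      using pre[of True] pre[of False] ne by metis
    moreover have "lab g w = g (w@[False]) ! length w" by (simp add: lab_def)
    ultimately have "g (w@[True]) ! length w = (\<not> lab g w)" by (cases "lab g w") auto
    then show ?thesis using pre[of True] True by simp
  qed
qed

lemma tree_aut_port: "tree_aut g \<Longrightarrow> port (lab g) = g"
proof (rule ext)
  fix w assume g: "tree_aut g"
  show "port (lab g) w = g w"
  proof (induct w rule: rev_induct)
    case Nil
    have "length (g []) = 0" using g unfolding tree_aut_def by auto
    then show ?case by simp
  next
    case (snoc x w)
    then show ?case by (simp add: port_snoc tree_aut_snoc[OF g])
  qed
qed

lemma AutT_eq: "AutT = range port"
  unfolding AutT_def using tree_aut_port port_tree_aut by (metis (mono_tags) mem_Collect_eq rangeI subsetI subset_antisym image_subset_iff)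

lemma port_eq_iff: "port a = port b \<longleftrightarrow> a = b"
  by (metis lab_port)

definition comp_lab :: "(bool list \<Rightarrow> bool) \<Rightarrow> (bool list \<Rightarrow> bool) \<Rightarrow> bool list \<Rightarrow> bool" where
  "comp_lab a b = (\<lambda>u. b u \<noteq> a (port b u))"

lemma port_comp: "port a \<circ> port b = port (comp_lab a b)"
proof (rule ext)
  fix w show "(port a \<circ> port b) w = port (comp_lab a b) w"
    by (induct w rule: rev_induct) (auto simp: port_snoc comp_lab_def)
qed

lemma port_id: "port (\<lambda>_. False) = id"
proof (rule ext)
  fix w show "port (\<lambda>_. False) w = id w"
    by (induct w rule: rev_induct) (auto simp: port_snoc)
qed

lemma inv_tree_aut: assumes "tree_aut g" shows "tree_aut (inv g)"
proof -
  have bg: "bij g" and lg: "\<And>w. length (g w) = length w"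
    and pg: "\<And>u v. prefix u v \<Longrightarrow> prefix (g u) (g v)"
    using assms unfolding tree_aut_def by auto
  have gi: "\<And>w. g (inv g w) = w" using bg by (simp add: bij_is_surj surj_f_inv_f)
  have ig: "\<And>w. inv g (g w) = w" using bg by (simp add: bij_is_inj)
  have li: "\<And>w. length (inv g w) = length w" by (metis gi lg)
  have "prefix (inv g u) (inv g v)" if "prefix u v" for u v
  proof -
    let ?x = "inv g v"
    let ?x' = "take (length u) ?x"
    have "prefix ?x' ?x" by (simp add: take_is_prefix)
    then have "prefix (g ?x') v" using pg gi by metis
    moreover have "length (g ?x') = length u"
      using lg li prefix_length_le[OF that] by simp
    ultimately have "g ?x' = u" using that
      by (metis prefix_length_prefix prefix_order.eq_iff order_refl)
    then have "?x' = inv g u" using ig by metis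
    then show ?thesis by (metis take_is_prefix)
  qed
  then show ?thesis unfolding tree_aut_def using bij_imp_bij_inv[OF bg] li by auto
qed

lemma inv_port: "\<exists>b. inv (port a) = port b \<and> comp_lab a b = (\<lambda>_. False)"
proof -
  have "tree_aut (inv (port a))" by (rule inv_tree_aut[OF port_tree_aut])
  then have e: "inv (port a) = port (lab (inv (port a)))" by (simp add: tree_aut_port)
  let ?b = "lab (inv (port a))"
  have "port a \<circ> port ?b = id" using e port_bij
    by (metis bij_is_surj surj_iff)
  then have "port (comp_lab a ?b) = port (\<lambda>_. False)" by (simp add: port_comp port_id)
  then show ?thesis using e by (auto simp: port_eq_iff)
qed

lemma port_cong: "(\<And>u. length u < length w \<Longrightarrow> a u = a' u) \<Longrightarrow> port a w = port a' w"
proof (induct w rule: rev_induct)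
  case Nil then show ?case by simp
next
  case (snoc x w) then show ?case by (simp add: port_snoc)
qed

lemma proj_port_eq_iff:
  "proj n (port a) = proj n (port a') \<longleftrightarrow> (\<forall>u. length u < n \<longrightarrow> a u = a' u)"
proof
  assume h: "proj n (port a) = proj n (port a')"
  show "\<forall>u. length u < n \<longrightarrow> a u = a' u"
  proof (intro allI impI)
    fix u :: "bool list" assume "length u < n"
    then have "proj n (port a) (u@[False]) = port a (u@[False])"
      "proj n (port a') (u@[False]) = port a' (u@[False])" by (auto simp: proj_def)
    then have "port a (u@[False]) = port a' (u@[False])" using h by simp
    then show "a u = a' u" by (simp add: port_snoc)
  qed
next
  assume "\<forall>u. length u < n \<longrightarrow> a u = a' u"
  then show "proj n (port a) = proj n (port a')"
    by (auto simp: proj_def intro!: ext port_cong)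
qed

lemma snoc_gen:
  assumes inj: "inj g" and len: "\<And>w. length (g w) = length w"
    and pre: "\<And>y. prefix (g w) (g (w@[y]))"
  shows "g (w @ [x]) = g w @ [x \<noteq> lab g w]"
proof -
  have pre': "\<And>y. g (w@[y]) = g w @ [g (w@[y]) ! length w]"
  proof -
    fix y
    obtain r where r: "g (w@[y]) = g w @ r" using pre[of y] by (auto simp: prefix_def)
    have "length (g (w@[y])) = length w + 1" "length (g w) = length w" using len by auto
    with r have "length r = 1" by simp
    then obtain c where "r = [c]" by (cases r) auto
    with r show "g (w@[y]) = g w @ [g (w@[y]) ! length w]"
      using \<open>length (g w) = length w\<close> by (simp add: nth_append)
  qed
  have ne: "g (w@[True]) \<noteq> g (w@[False])" using inj by (auto dest: injD)
  show ?thesis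
  proof (cases x)
    case False then show ?thesis using pre'[of False] by (simp add: lab_def)
  next
    case True
    have "g (w@[True]) ! length w \<noteq> g (w@[False]) ! length w"
      using pre'[of True] pre'[of False] ne by metis
    moreover have "lab g w = g (w@[False]) ! length w" by (simp add: lab_def)
    ultimately have "g (w@[True]) ! length w = (\<not> lab g w)" by (cases "lab g w") auto
    then show ?thesis using pre'[of True] True by simp
  qed
qed

lemma fin_aut_port: "fin_aut n h \<Longrightarrow> h = proj n (port (lab h))"
proof (rule ext)
  fix w assume h: "fin_aut n h"
  have inj: "inj h" and len: "\<And>w. length (h w) = length w" and id: "\<And>w. n < length w \<Longrightarrow> h w = w"
    and pr: "\<And>u v. length v \<le> n \<Longrightarrow> prefix u v \<Longrightarrow> prefix (h u) (h v)"
    using h unfolding fin_aut_def bij_def by auto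
  have "length w \<le> n \<Longrightarrow> h w = port (lab h) w"
  proof (induct w rule: rev_induct)
    case Nil then show ?case using len[of "[]"] by simp
  next
    case (snoc x w)
    have "h (w@[x]) = h w @ [x \<noteq> lab h w]"
      by (rule snoc_gen[OF inj len]) (use snoc.prems in \<open>auto intro!: pr\<close>)
    then show ?case using snoc by (simp add: port_snoc)
  qed
  then show "h w = proj n (port (lab h)) w" using id by (auto simp: proj_def)
qed

lemma proj_port_fin_aut: "fin_aut n (proj n (port a))"
proof -
  let ?h = "proj n (port a)"
  have inj: "inj ?h"
  proof (rule injI)
    fix x y assume e: "?h x = ?h y"
    have lx: "length (?h x) = length x" "length (?h y) = length y" by (auto simp: proj_def)
    then have "length x = length y" using e by metis
    then show "x = y" using e port_inj_aux by (auto simp: proj_def split: if_splits)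
  qed
  have surj: "surj ?h"
    unfolding surj_def
  proof (rule allI)
    fix y
    show "\<exists>x. y = ?h x"
    proof (cases "length y \<le> n")
      case True
      obtain w where "port a w = y" using port_surj_aux by blast
      then show ?thesis using True by (intro exI[of _ w]) (auto simp: proj_def)
    next
      case False then show ?thesis by (intro exI[of _ y]) (auto simp: proj_def)
    qed
  qed
  have pre: "prefix (?h u) (?h v)" if lv: "length v \<le> n" and pu: "prefix u v" for u v
  proof -
    obtain r where v: "v = u @ r" using pu by (auto simp: prefix_def)
    have "length u \<le> n" using lv v by simp
    then show ?thesis using lv v by (simp add: proj_def port_append)
  qed
  show ?thesis unfolding fin_aut_def
    using inj surj pre by (auto simp: bij_def proj_def)
qed

lemma AutD_eq: "AutD n = range (\<lambda>a. proj n (port a))"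
  unfolding AutD_def using fin_aut_port proj_port_fin_aut by blast

lemma sect_port: "sect (port a) w = port (\<lambda>y. a (w@y))"
  by (auto simp: sect_def port_append intro!: ext)

lemma proj_proj: "m \<le> n \<Longrightarrow> proj m (proj n g) = proj m g"
  by (auto simp: proj_def intro!: ext)

lemma proj_comp: "(\<And>w. length (g w) = length w) \<Longrightarrow> proj n f \<circ> proj n g = proj n (f \<circ> g)"
  by (auto simp: proj_def intro!: ext)

definition Fun :: "bool list set \<Rightarrow> (bool list \<Rightarrow> bool) set" where
  "Fun A = {f. \<forall>u. f u \<longrightarrow> u \<in> A}"

lemma card_Fun: assumes "finite A" shows "card (Fun A) = 2 ^ card A"
proof -
  have "bij_betw (\<lambda>f. {u. f u}) (Fun A) (Pow A)"
    by (rule bij_betw_byWitness[where f'="\<lambda>B u. u \<in> B"]) (auto simp: Fun_def)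
  then have "card (Fun A) = card (Pow A)" by (rule bij_betw_same_card)
  then show ?thesis using assms by (simp add: card_Pow)
qed

lemma words_eq: "{y::bool list. length y = j} = {xs. set xs \<subseteq> UNIV \<and> length xs = j}" by auto

lemma finite_words[simp]: "finite {y::bool list. length y = j}"
  unfolding words_eq by (rule finite_lists_length_eq) simp

lemma card_words: "card {y::bool list. length y = j} = 2 ^ j"
  unfolding words_eq by (subst card_lists_length_eq) simp_all

lemma finite_Wl[simp]: "finite {y::bool list. length y < n}"
proof -
  have "{y::bool list. length y < n} = (\<Union>j<n. {y. length y = j})" by auto
  then show ?thesis by simp
qed

lemma card_Wl: "card {y::bool list. length y < n} = 2 ^ n - 1"
proof (induct n)
  case 0 then show ?case by simp
next
  case (Suc n)
  have "{y::bool list. length y < Suc n} = {y. length y < n} \<union> {y. length y = n}" by auto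
  then have "card {y::bool list. length y < Suc n} = card {y::bool list. length y < n} + card {y::bool list. length y = n}"
    by (simp add: card_Un_disjoint disjoint_iff)
  also have "\<dots> = 2 ^ n - 1 + 2 ^ n" using Suc card_words by simp
  also have "\<dots> = 2 ^ Suc n - 1"
  proof -
    have p: "(1::nat) \<le> 2 ^ n" by simp
    then show ?thesis by simp
  qed
  finally show ?case .
qed

lemma card_AutD: "card (AutD n) = 2 ^ (2 ^ n - 1)"
proof -
  have "bij_betw (\<lambda>a. proj n (port a)) (Fun {y. length y < n}) (AutD n)"
    unfolding bij_betw_def
  proof
    show "inj_on (\<lambda>a. proj n (port a)) (Fun {y. length y < n})"
    proof (rule inj_onI)
      fix a a' assume "a \<in> Fun {y. length y < n}" "a' \<in> Fun {y. length y < n}"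
        "proj n (port a) = proj n (port a')"
      then have A: "\<forall>u. a u \<longrightarrow> length u < n" "\<forall>u. a' u \<longrightarrow> length u < n"
        and B: "\<forall>u. length u < n \<longrightarrow> a u = a' u" by (simp_all add: Fun_def proj_port_eq_iff)
      show "a = a'"
      proof
        fix u show "a u = a' u" using A B by (cases "length u < n") auto
      qed
    qed
    show "(\<lambda>a. proj n (port a)) ` Fun {y. length y < n} = AutD n"
    proof
      show "(\<lambda>a. proj n (port a)) ` Fun {y. length y < n} \<subseteq> AutD n" unfolding AutD_eq by blast
      show "AutD n \<subseteq> (\<lambda>a. proj n (port a)) ` Fun {y. length y < n}"
      proof
        fix h assume "h \<in> AutD n"
        then obtain a where h: "h = proj n (port a)" unfolding AutD_eq by blast
        let ?a = "\<lambda>u. a u \<and> length u < n"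
        have "h = proj n (port ?a)" unfolding h proj_port_eq_iff by simp
        moreover have "?a \<in> Fun {y. length y < n}" by (auto simp: Fun_def)
        ultimately show "h \<in> (\<lambda>a. proj n (port a)) ` Fun {y. length y < n}" by blast
      qed
    qed
  qed
  then have "card (AutD n) = card (Fun {y::bool list. length y < n})" by (simp add: bij_betw_same_card)
  also have "\<dots> = 2 ^ card {y::bool list. length y < n}" by (rule card_Fun) simp
  finally show ?thesis by (simp only: card_Wl)
qed

definition W :: "nat \<Rightarrow> bool list set" where "W j = {y. length y = j}"

lemma finite_W[simp]: "finite (W j)" by (simp add: W_def)

definition lam :: "nat \<Rightarrow> (bool list \<Rightarrow> bool) \<Rightarrow> bool list \<Rightarrow> nat" where
  "lam j a v = (\<Sum>y\<in>W j. if a (v@y) then 1 else 0)"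

lemma lam_cong: "(\<And>y. length y = j \<Longrightarrow> a (v@y) = a' (v@y)) \<Longrightarrow> lam j a v = lam j a' v"
  unfolding lam_def W_def by (rule sum.cong) auto

lemma W_Suc: "W (Suc j) = Cons False ` W j \<union> Cons True ` W j"
proof
  show "W (Suc j) \<subseteq> Cons False ` W j \<union> Cons True ` W j"
  proof
    fix y assume "y \<in> W (Suc j)"
    then obtain x y' where "y = x # y'" "length y' = j" by (cases y) (auto simp: W_def)
    then show "y \<in> Cons False ` W j \<union> Cons True ` W j" by (cases x) (auto simp: W_def)
  qed
qed (auto simp: W_def)

lemma lam_Suc: "lam (Suc j) a v = lam j a (v@[False]) + lam j a (v@[True])"
proof -
  have "lam (Suc j) a v = (\<Sum>y\<in>Cons False ` W j. if a (v@y) then 1 else 0) + (\<Sum>y\<in>Cons True ` W j. if a (v@y) then 1 else 0)"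
    unfolding lam_def W_Suc by (rule sum.union_disjoint) auto
  also have "\<dots> = lam j a (v@[False]) + lam j a (v@[True])"
    unfolding lam_def by (simp add: sum.reindex)
  finally show ?thesis .
qed

lemma port_bij_W: "bij_betw (port b) (W j) (W j)"
proof -
  have "port b ` W j = W j"
  proof
    show "port b ` W j \<subseteq> W j" by (auto simp: W_def)
    show "W j \<subseteq> port b ` W j"
    proof
      fix y assume "y \<in> W j"
      obtain w where "port b w = y" using port_surj_aux by blast
      then show "y \<in> port b ` W j" using \<open>y \<in> W j\<close> by (auto simp: W_def)
    qed
  qed
  then show ?thesis unfolding bij_betw_def using port_inj inj_on_subset by blast
qed

lemma lam_port: "lam j (\<lambda>u. a (port b u)) v = lam j a (port b v)"
proof -
  have "lam j (\<lambda>u. a (port b u)) v = (\<Sum>y\<in>W j. if a (port b v @ port (\<lambda>t. b (v@t)) y) then 1 else 0)"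
    unfolding lam_def by (simp add: port_append)
  also have "\<dots> = (\<Sum>y\<in>W j. if a (port b v @ y) then 1 else 0)"
    by (rule sum.reindex_bij_betw[OF port_bij_W, of "\<lambda>y. if a (port b v @ y) then 1 else 0"])
  finally show ?thesis by (simp add: lam_def)
qed

lemma lam_comp: "even (lam j (comp_lab a b) v + lam j b v + lam j a (port b v))"
proof -
  have "lam j (comp_lab a b) v + lam j b v + lam j a (port b v)
      = lam j (comp_lab a b) v + lam j b v + lam j (\<lambda>u. a (port b u)) v" by (simp add: lam_port)
  also have "\<dots> = (\<Sum>y\<in>W j. (if comp_lab a b (v@y) then 1 else 0) + (if b (v@y) then 1 else 0)
        + (if a (port b (v@y)) then 1 else 0))"
    unfolding lam_def by (simp add: sum.distrib)
  finally show ?thesis by (auto intro!: dvd_sum simp: comp_lab_def)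
qed

lemma lam_upd_same:
  assumes "a u = False" "u = v @ y0" "length y0 = j"
  shows "lam j (a(u := x)) v = lam j a v + (if x then 1 else 0)"
proof -
  have y0: "y0 \<in> W j" using assms by (simp add: W_def)
  have "lam j (a(u := x)) v = (if x then 1 else 0) + (\<Sum>y\<in>W j - {y0}. if (a(u:=x)) (v@y) then 1 else 0)"
    unfolding lam_def using y0 assms by (simp add: sum.remove)
  also have "(\<Sum>y\<in>W j - {y0}. if (a(u:=x)) (v@y) then 1 else 0) = (\<Sum>y\<in>W j - {y0}. if a (v@y) then 1 else 0)"
    using assms by (intro sum.cong) auto
  also have "\<dots> = lam j a v"
    unfolding lam_def using y0 assms by (simp add: sum.remove)
  finally show ?thesis unfolding fun_upd_def by (simp only: add.commute)
qed

lemma lam_upd_other: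
  assumes "\<not> (\<exists>y. u = v @ y \<and> length y = j)"
  shows "lam j (a(u := x)) v = lam j a v"
  using assms by (intro lam_cong) auto

lemma lam_zero[simp]: "lam j (\<lambda>_. False) v = 0" by (simp add: lam_def)

locale fam =
  fixes D :: nat and T :: "nat set"
  assumes D1: "1 \<le> D" and TD: "T \<subseteq> {1..D}" and DT: "D \<in> T"
begin

lemma finT[simp]: "finite T" using TD finite_subset by blast

definition L :: "(bool list \<Rightarrow> bool) \<Rightarrow> bool list \<Rightarrow> nat" where
  "L a v = (\<Sum>j\<in>T. lam j a v)"

definition good :: "(bool list \<Rightarrow> bool) \<Rightarrow> bool" where
  "good a \<longleftrightarrow> (\<forall>v. v \<noteq> [] \<longrightarrow> even (L a v))"

lemma L_comp: "even (L (comp_lab a b) v + L b v + L a (port b v))"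
proof -
  have "L (comp_lab a b) v + L b v + L a (port b v) = (\<Sum>j\<in>T. lam j (comp_lab a b) v + lam j b v + lam j a (port b v))"
    by (simp add: L_def sum.distrib)
  then show ?thesis by (auto intro!: dvd_sum lam_comp)
qed

lemma good_comp: "good a \<Longrightarrow> good b \<Longrightarrow> good (comp_lab a b)"
  unfolding good_def
proof (intro allI impI)
  fix v :: "bool list" assume a: "\<forall>v. v \<noteq> [] \<longrightarrow> even (L a v)" and b: "\<forall>v. v \<noteq> [] \<longrightarrow> even (L b v)"
    and v: "v \<noteq> []"
  have "port b v \<noteq> []" using v by (metis length_0_conv port_length)
  then have "even (L a (port b v))" "even (L b v)" using a b v by auto
  then show "even (L (comp_lab a b) v)" using L_comp[of a b v] by auto
qed

lemma L_zero[simp]: "L (\<lambda>_. False) v = 0" by (simp add: L_def)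

lemma good_zero: "good (\<lambda>_. False)" by (simp add: good_def)

lemma good_inv: assumes "good a" "comp_lab a b = (\<lambda>_. False)" shows "good b"
  unfolding good_def
proof (intro allI impI)
  fix v :: "bool list" assume v: "v \<noteq> []"
  have "port b v \<noteq> []" using v by (metis length_0_conv port_length)
  then have "even (L a (port b v))" using assms(1) by (auto simp: good_def)
  then show "even (L b v)" using L_comp[of a b v] assms(2) by auto
qed

lemma L_cong: "(\<And>y. 1 \<le> length y \<Longrightarrow> length y \<le> D \<Longrightarrow> a (v@y) = a' (v@y)) \<Longrightarrow> L a v = L a' v"
  unfolding L_def using TD by (intro sum.cong refl lam_cong) auto

lemma L_upd:
  assumes "a u = False" "u = v @ y0" "length y0 = D"
  shows "L (a(u := x)) v = L a v + (if x then 1 else 0)"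
proof -
  have "L (a(u := x)) v = lam D (a(u := x)) v + (\<Sum>j\<in>T - {D}. lam j (a(u := x)) v)"
    unfolding L_def using DT by (simp add: sum.remove)
  also have "(\<Sum>j\<in>T - {D}. lam j (a(u := x)) v) = (\<Sum>j\<in>T - {D}. lam j a v)"
    using assms by (intro sum.cong refl lam_upd_other) auto
  also have "lam D (a(u := x)) v = lam D a v + (if x then 1 else 0)"
    using assms by (intro lam_upd_same) auto
  also have "lam D a v + (if x then 1 else 0) + (\<Sum>j\<in>T - {D}. lam j a v) = L a v + (if x then 1 else 0)"
    unfolding L_def using DT by (simp add: sum.remove)
  finally show ?thesis .
qed

end

lemma lam_shift: "lam j (\<lambda>y. a (w@y)) v = lam j a (w@v)"
  by (simp add: lam_def)

context fam begin

lemma L_shift: "L (\<lambda>y. a (w@y)) v = L a (w@v)"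
  by (simp add: L_def lam_shift)

definition corr :: "bool list \<Rightarrow> bool" where
  "corr u \<longleftrightarrow> D < length u \<and> drop (length u - D) u = replicate D False"

definition base :: "bool list \<Rightarrow> bool list" where
  "base u = take (length u - D) u"

primrec Lab :: "(bool list \<Rightarrow> bool) \<Rightarrow> nat \<Rightarrow> bool list \<Rightarrow> bool" where
  "Lab f 0 = f"
| "Lab f (Suc n) = (\<lambda>u. if length u = n \<and> corr u then odd (L ((Lab f n)(u := False)) (base u)) else Lab f n u)"

definition E :: "(bool list \<Rightarrow> bool) \<Rightarrow> bool list \<Rightarrow> bool" where
  "E f u = Lab f (Suc (length u)) u"

lemma Lab_ge: "n \<le> length u \<Longrightarrow> Lab f n u = f u"
  by (induct n) auto

lemma Lab_lt: "length u < n \<Longrightarrow> Lab f n u = E f u"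
proof (induct n)
  case 0 then show ?case by simp
next
  case (Suc n)
  show ?case
  proof (cases "length u = n")
    case True then show ?thesis by (simp add: E_def)
  next
    case False
    then have "Lab f (Suc n) u = Lab f n u" by simp
    with Suc False show ?thesis by simp
  qed
qed

lemma E_free: "\<not> corr u \<Longrightarrow> E f u = f u"
  by (simp add: E_def Lab_ge)

lemma corr_app: "v \<noteq> [] \<Longrightarrow> corr (v @ replicate D False)"
  by (simp add: corr_def)

lemma base_app: "base (v @ replicate D False) = v"
  by (simp add: base_def)

lemma corr_len: "corr u \<Longrightarrow> D < length u"
  by (simp add: corr_def)

lemma corr_base: "corr u \<Longrightarrow> u = base u @ replicate D False \<and> base u \<noteq> []"
  unfolding corr_def base_def
  by (metis append_take_drop_id diff_less gr_implies_not0 length_0_conv length_greater_0_conv take_eq_Nil zero_less_diff)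

lemma noncorr_D: "length y = D \<Longrightarrow> y \<noteq> replicate D False \<Longrightarrow> \<not> corr (v @ y)"
  by (simp add: corr_def)

lemma L_split:
  assumes "u = v @ replicate D False"
  shows "L a v = L (a(u := False)) v + (if a u then 1 else 0)"
proof -
  have "L ((a(u := False))(u := a u)) v = L (a(u := False)) v + (if a u then 1 else 0)"
    by (rule L_upd) (use assms in auto)
  then show ?thesis by simp
qed

lemma E_good: "good (E f)"
  unfolding good_def
proof (intro allI impI)
  fix v :: "bool list" assume v: "v \<noteq> []"
  define u where "u = v @ replicate D False"
  define n where "n = length u"
  define a0 where "a0 = (Lab f n)(u := False)"
  have cu: "corr u" using v by (simp add: u_def corr_app)
  have bu: "base u = v" by (simp add: u_def base_app)
  have Eu: "E f u = odd (L a0 v)"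
    using cu bu by (simp add: E_def a0_def n_def)
  have "L (E f) v = L (a0(u := E f u)) v"
  proof (rule L_cong)
    fix y :: "bool list" assume y1: "1 \<le> length y" and yD: "length y \<le> D"
    show "E f (v @ y) = (a0(u := E f u)) (v @ y)"
    proof (cases "v @ y = u")
      case True then show ?thesis by simp
    next
      case False
      show ?thesis
      proof (cases "length y < D")
        case True
        then have "length (v@y) < n" by (simp add: n_def u_def)
        then show ?thesis using False by (simp add: a0_def Lab_lt)
      next
        case False': False
        then have ly: "length y = D" using yD by simp
        then have "y \<noteq> replicate D False" using False by (auto simp: u_def)
        then have "\<not> corr (v @ y)" using ly noncorr_D by blast
        moreover have "n \<le> length (v @ y)" using ly by (simp add: n_def u_def)
        ultimately show ?thesis using False by (simp add: a0_def Lab_ge E_free)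
      qed
    qed
  qed
  also have "\<dots> = L a0 v + (if E f u then 1 else 0)"
    by (rule L_upd) (auto simp: a0_def u_def)
  finally show "even (L (E f) v)" using Eu by auto
qed

lemma unique:
  assumes ga: "good a" and ga': "good a'"
    and fr: "\<And>u. length u < n \<Longrightarrow> \<not> corr u \<Longrightarrow> a u = a' u"
  shows "length u < n \<Longrightarrow> a u = a' u"
proof (induct "length u" arbitrary: u rule: less_induct)
  case less
  show ?case
  proof (cases "corr u")
    case False then show ?thesis using fr less by auto
  next
    case True
    define v where "v = base u"
    have u: "u = v @ replicate D False" and v: "v \<noteq> []" using corr_base[OF True] by (auto simp: v_def)
    have "L (a(u := False)) v = L (a'(u := False)) v"
    proof (rule L_cong)
      fix y :: "bool list" assume y1: "1 \<le> length y" and yD: "length y \<le> D"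
      show "(a(u := False)) (v @ y) = (a'(u := False)) (v @ y)"
      proof (cases "v @ y = u")
        case True then show ?thesis by simp
      next
        case False
        show ?thesis
        proof (cases "length y < D")
          case True
          then have "length (v@y) < length u" by (simp add: u)
          then show ?thesis using False less by simp
        next
          case False': False
          then have ly: "length y = D" using yD by simp
          then have "y \<noteq> replicate D False" using False by (auto simp: u)
          then have "\<not> corr (v @ y)" using ly noncorr_D by blast
          moreover have "length (v@y) < n" using ly less.prems by (simp add: u)
          ultimately show ?thesis using False fr by simp
        qed
      qed
    qed
    moreover have "even (L a v)" "even (L a' v)" using ga ga' v by (auto simp: good_def)
    ultimately show ?thesis using L_split[OF u, of a] L_split[OF u, of a']
      by (cases "a u"; cases "a' u") auto
  qed
qed

lemma E_agree: "length u \<le> D \<Longrightarrow> E f u = f u"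
  using corr_len E_free by fastforce

end

lemma lam_single: "lam j (\<lambda>u. u = v @ y0) v = (if length y0 = j then 1 else 0)"
proof -
  have "lam j (\<lambda>u. u = v @ y0) v = (\<Sum>y\<in>W j. if y0 = y then 1 else 0)"
    unfolding lam_def by (intro sum.cong) auto
  also have "\<dots> = (if length y0 = j then 1 else 0)" by (simp add: W_def)
  finally show ?thesis .
qed

lemma proj_id[simp]: "proj n id = id" by (auto simp: proj_def intro!: ext)

lemma inv_proj:
  assumes "f \<circ> g = id" "g \<circ> f = id" "\<And>w. length (f w) = length w" "\<And>w. length (g w) = length w"
  shows "inv (proj n f) = proj n g"
proof (rule inv_unique_comp)
  show "proj n f \<circ> proj n g = id" using assms by (simp add: proj_comp)
  show "proj n g \<circ> proj n f = id" using assms by (simp add: proj_comp)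
qed


context fam begin

definition Pg :: "(bool list \<Rightarrow> bool list) set" where
  "Pg = {proj (D+2) (port a) | a. even (L a [False]) \<and> even (L a [True])}"

definition K :: "(bool list \<Rightarrow> bool list) set" where
  "K = GP (D+2) Pg"

lemma L_loc: "(\<And>u. length u < D+2 \<Longrightarrow> a u = a' u) \<Longrightarrow> L a [x] = L a' [x]"
  by (rule L_cong) auto

lemma mem_Pg: "proj (D+2) (port a) \<in> Pg \<longleftrightarrow> even (L a [False]) \<and> even (L a [True])"
proof
  assume "proj (D+2) (port a) \<in> Pg"
  then obtain a' where e: "proj (D+2) (port a) = proj (D+2) (port a')"
    and c: "even (L a' [False])" "even (L a' [True])" unfolding Pg_def by blast
  have "\<And>u. length u < D+2 \<Longrightarrow> a u = a' u" using e by (simp add: proj_port_eq_iff)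
  then have "L a [x] = L a' [x]" for x by (rule L_loc)
  then show "even (L a [False]) \<and> even (L a [True])" using c by simp
qed (auto simp: Pg_def)

lemmas mem_Pg2 = mem_Pg[simplified]

lemma good_iff: "good a \<longleftrightarrow> (\<forall>w x. even (L a (w@[x])))"
  unfolding good_def
proof
  assume "\<forall>v. v \<noteq> [] \<longrightarrow> even (L a v)" then show "\<forall>w x. even (L a (w@[x]))" by simp
next
  assume h: "\<forall>w x. even (L a (w@[x]))"
  show "\<forall>v. v \<noteq> [] \<longrightarrow> even (L a v)"
  proof (intro allI impI)
    fix v :: "bool list" assume "v \<noteq> []"
    then obtain w x where "v = w @ [x]" by (metis rev_exhaust)
    then show "even (L a v)" using h by simp
  qed
qed

lemma K_eq: "K = port ` Collect good"
proof -
  have "g \<in> K \<longleftrightarrow> g \<in> port ` Collect good" for g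
  proof -
    have "g \<in> K \<longleftrightarrow> (\<exists>a. g = port a \<and> (\<forall>w. proj (D+2) (sect (port a) w) \<in> Pg))"
      unfolding K_def GP_def AutT_eq by blast
    also have "\<dots> \<longleftrightarrow> (\<exists>a. g = port a \<and> (\<forall>w x. even (L a (w@[x]))))"
    proof -
      have "(\<forall>w. proj (D+2) (sect (port a) w) \<in> Pg) \<longleftrightarrow> (\<forall>w x. even (L a (w@[x])))" for a
      proof -
        have "proj (D+2) (sect (port a) w) \<in> Pg \<longleftrightarrow> even (L a (w@[False])) \<and> even (L a (w@[True]))" for w
          unfolding sect_port mem_Pg L_shift by simp
        then show ?thesis by (metis (full_types))
      qed
      then show ?thesis by simp
    qed
    also have "\<dots> \<longleftrightarrow> g \<in> port ` Collect good" by (auto simp: good_iff)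
    finally show ?thesis .
  qed
  then show ?thesis by blast
qed

lemma K_port: "port a \<in> K \<longleftrightarrow> good a"
  unfolding K_eq by (auto simp: port_eq_iff)

lemma K_AutT: "K \<subseteq> AutT" by (auto simp: K_eq AutT_eq)

lemma K_comp: "g \<in> K \<Longrightarrow> h \<in> K \<Longrightarrow> g \<circ> h \<in> K"
  unfolding K_eq by (auto simp: port_comp good_comp)

lemma K_id: "id \<in> K"
  unfolding K_eq using good_zero port_id by (metis imageI mem_Collect_eq)

lemma K_inv: "g \<in> K \<Longrightarrow> inv g \<in> K"
  unfolding K_eq using inv_port good_inv by fastforce

lemma Pg_subgroup: "is_subgroup_of Pg (AutD (D+2))"
  unfolding is_subgroup_of_def
proof (intro conjI ballI)
  show "Pg \<subseteq> AutD (D+2)" by (auto simp: Pg_def AutD_eq)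
  show "id \<in> Pg"
  proof -
    have "proj (D+2) (port (\<lambda>_. False)) \<in> Pg" using mem_Pg[of "\<lambda>_. False"] by simp
    then show ?thesis by (simp add: port_id proj_id)
  qed
  fix p assume p: "p \<in> Pg"
  then obtain a where pa: "p = proj (D+2) (port a)" and ca: "even (L a [False])" "even (L a [True])"
    unfolding Pg_def by blast
  have ca': "even (L a [x])" for x using ca by (cases x) auto
  {
    fix q assume "q \<in> Pg"
    then obtain b where qb: "q = proj (D+2) (port b)" and cb: "even (L b [False])" "even (L b [True])"
      unfolding Pg_def by blast
    have "p \<circ> q = proj (D+2) (port (comp_lab a b))"
      by (simp add: pa qb proj_comp port_comp)
    moreover have "even (L (comp_lab a b) [x])" for x
    proof -
      have "port b [x] = [x \<noteq> b []]" by simp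
      then have "even (L a (port b [x]))" using ca' by simp
      moreover have "even (L b [x])" using cb by (cases x) auto
      ultimately show ?thesis using L_comp[of a b "[x]"] by auto
    qed
    ultimately show "p \<circ> q \<in> Pg" by (simp add: mem_Pg mem_Pg2)
  }
  obtain b where ib: "inv (port a) = port b" and cb: "comp_lab a b = (\<lambda>_. False)" using inv_port by blast
  have "port a \<circ> port b = id" using cb by (simp add: port_comp port_id)
  moreover have "port b \<circ> port a = id" using ib port_bij
    by (metis bij_is_inj inv_o_cancel)
  ultimately have "inv p = proj (D+2) (port b)" unfolding pa by (intro inv_proj) auto
  moreover have "even (L b [x])" for x
  proof -
    have "port b [x] = [x \<noteq> b []]" by simp
    then have "even (L a (port b [x]))" using ca' by simp
    then show ?thesis using L_comp[of a b "[x]"] cb by auto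
  qed
  ultimately show "inv p \<in> Pg" by (simp add: mem_Pg mem_Pg2)
qed

lemma Pg_essential: "essential_pattern_group (D+2) Pg"
  unfolding essential_pattern_group_def
proof (intro conjI ballI allI Pg_subgroup)
  fix p i assume "p \<in> Pg"
  then obtain a where pa: "p = proj (D+2) (port a)" unfolding Pg_def by blast
  define ai where "ai = (\<lambda>y. a (i#y))"
  have sp: "sect p [i] = proj (D+1) (port ai)"
    by (auto simp: sect_def pa proj_def ai_def intro!: ext)
  define q where "q = proj (D+2) (port (E ai))"
  have "q \<in> Pg" unfolding q_def mem_Pg using E_good[of ai] by (auto simp: good_def)
  moreover have "proj (D + 2 - 1) q = proj (D + 2 - 1) (sect p [i])"
  proof -
    have "proj (D+1) q = proj (D+1) (port (E ai))" by (simp add: q_def proj_proj)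
    also have "\<dots> = proj (D+1) (port ai)" unfolding proj_port_eq_iff by (simp add: E_agree)
    also have "\<dots> = proj (D+1) (sect p [i])" by (simp add: sp proj_proj)
    finally show ?thesis by simp
  qed
  ultimately show "\<exists>q\<in>Pg. proj (D + 2 - 1) q = proj (D + 2 - 1) (sect p [i])" by blast
qed

lemma K_constrained: "constrained_by_size (D+2) K"
  unfolding constrained_by_size_def K_def using Pg_essential by blast

lemma K_not_small: "d' < D+2 \<Longrightarrow> \<not> constrained_by_size d' K"
proof
  assume d': "d' < D+2" and "constrained_by_size d' K"
  then obtain P' where KP: "K = GP d' P'" unfolding constrained_by_size_def by blast
  define a0 where "a0 = (\<lambda>u. u = [False] @ replicate D False)"
  have "lam j a0 [False] = (if length (replicate D False) = j then 1 else 0)" for j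
    unfolding a0_def by (rule lam_single)
  then have "L a0 [False] = (\<Sum>j\<in>T. if D = j then 1 else 0)"
    unfolding L_def by simp
  also have "\<dots> = 1" using DT by simp
  finally have "\<not> good a0" unfolding good_def by (metis list.distinct(1) odd_one)
  then have "port a0 \<notin> K" by (simp add: K_port)
  moreover have "port a0 \<in> GP d' P'"
    unfolding GP_def
  proof (intro CollectI conjI allI)
    show "port a0 \<in> AutT" by (simp add: AutT_eq)
    fix w
    define b where "b = (\<lambda>y. a0 (w@y))"
    have "port (E b) \<in> K" using E_good by (simp add: K_port)
    then have "proj d' (sect (port (E b)) []) \<in> P'" using KP by (auto simp: GP_def)
    moreover have "sect (port (E b)) [] = port (E b)" by (simp add: sect_port)
    moreover have "proj d' (port (E b)) = proj d' (port b)"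
      unfolding proj_port_eq_iff using d' by (auto intro!: E_agree)
    ultimately show "proj d' (sect (port a0) w) \<in> P'" by (simp add: sect_port b_def)
  qed
  ultimately show False using KP by simp
qed

lemma K_defined: "defined_by_patterns_of_size (D+2) K"
  unfolding defined_by_patterns_of_size_def using K_constrained K_not_small by blast

lemma K_fc: "finitely_constrained K"
  unfolding finitely_constrained_def using K_constrained by blast

end

lemma card_nonempty_short: "1 \<le> m \<Longrightarrow> card {v::bool list. v \<noteq> [] \<and> length v < m} = 2 ^ m - 2"
proof -
  assume m: "1 \<le> m"
  have e: "{v::bool list. v \<noteq> [] \<and> length v < m} = {v. length v < m} - {[]}" by auto
  have "card ({v::bool list. length v < m} - {[]}) = card {v::bool list. length v < m} - 1"
    using m by (subst card_Diff_singleton) auto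
  then show ?thesis unfolding e card_Wl by simp
qed

context fam begin

definition Free :: "nat \<Rightarrow> bool list set" where
  "Free n = {u. length u < n \<and> \<not> corr u}"

lemma card_corr:
  assumes "D + 1 \<le> n"
  shows "card {u. length u < n \<and> corr u} = 2 ^ (n - D) - 2"
proof -
  have "bij_betw (\<lambda>v. v @ replicate D False) {v::bool list. v \<noteq> [] \<and> length v < n - D} {u. length u < n \<and> corr u}"
  proof (rule bij_betw_byWitness[where f'=base])
    show "\<forall>a\<in>{v::bool list. v \<noteq> [] \<and> length v < n - D}. base (a @ replicate D False) = a"
      by (simp add: base_app)
    show "\<forall>a'\<in>{u. length u < n \<and> corr u}. base a' @ replicate D False = a'"
    proof
      fix u assume "u \<in> {u. length u < n \<and> corr u}"
      then have "corr u" by blast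
      then show "base u @ replicate D False = u" using corr_base by metis
    qed
    show "(\<lambda>v. v @ replicate D False) ` {v. v \<noteq> [] \<and> length v < n - D} \<subseteq> {u. length u < n \<and> corr u}"
    proof
      fix u assume "u \<in> (\<lambda>v. v @ replicate D False) ` {v. v \<noteq> [] \<and> length v < n - D}"
      then obtain v where v: "v \<noteq> []" "length v < n - D" "u = v @ replicate D False" by blast
      then have "corr u" using corr_app by simp
      moreover have "length u < n" using v by simp
      ultimately show "u \<in> {u. length u < n \<and> corr u}" by blast
    qed
    show "base ` {u. length u < n \<and> corr u} \<subseteq> {v. v \<noteq> [] \<and> length v < n - D}"
    proof
      fix v assume "v \<in> base ` {u. length u < n \<and> corr u}"
      then obtain u where u: "length u < n" "corr u" and vu: "v = base u" by blast
      have cb: "u = base u @ replicate D False \<and> base u \<noteq> []" using corr_base[OF u(2)] .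
      have "length u = length (base u) + D" using arg_cong[OF conjunct1[OF cb], of length] by simp
      then have "length (base u) < n - D" using u(1) by linarith
      then show "v \<in> {v. v \<noteq> [] \<and> length v < n - D}" using cb unfolding vu by simp
    qed
  qed
  then have "card {u. length u < n \<and> corr u} = card {v::bool list. v \<noteq> [] \<and> length v < n - D}"
    by (simp add: bij_betw_same_card)
  also have "\<dots> = 2 ^ (n - D) - 2" using assms by (intro card_nonempty_short) simp
  finally show ?thesis .
qed

lemma card_Free:
  assumes "D + 1 \<le> n"
  shows "card (Free n) = (2 ^ n - 1) - (2 ^ (n - D) - 2)"
proof -
  have e: "Free n = {u. length u < n} - {u. length u < n \<and> corr u}" by (auto simp: Free_def)
  have "card (Free n) = card {u::bool list. length u < n} - card {u. length u < n \<and> corr u}"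
    unfolding e by (rule card_Diff_subset) auto
  then show ?thesis using card_corr[OF assms] card_Wl by simp
qed

lemma finite_Free[simp]: "finite (Free n)"
  by (rule finite_subset[of _ "{u. length u < n}"]) (auto simp: Free_def)

lemma card_projK: "card (proj n ` K) = 2 ^ card (Free n)"
proof -
  have "bij_betw (\<lambda>f. proj n (port (E f))) (Fun (Free n)) (proj n ` K)"
    unfolding bij_betw_def
  proof
    show "inj_on (\<lambda>f. proj n (port (E f))) (Fun (Free n))"
    proof (rule inj_onI)
      fix f f' assume f: "f \<in> Fun (Free n)" and f': "f' \<in> Fun (Free n)"
        and e: "proj n (port (E f)) = proj n (port (E f'))"
      have ag: "\<And>u. length u < n \<Longrightarrow> E f u = E f' u" using e by (simp add: proj_port_eq_iff)
      show "f = f'"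
      proof
        fix u show "f u = f' u"
        proof (cases "u \<in> Free n")
          case True
          then have "f u = E f u" "f' u = E f' u" by (auto simp: Free_def E_free)
          then show ?thesis using ag True by (auto simp: Free_def)
        next
          case False then show ?thesis using f f' by (auto simp: Fun_def)
        qed
      qed
    qed
    show "(\<lambda>f. proj n (port (E f))) ` Fun (Free n) = proj n ` K"
    proof
      show "(\<lambda>f. proj n (port (E f))) ` Fun (Free n) \<subseteq> proj n ` K"
        using E_good by (auto simp: K_port intro!: imageI)
      show "proj n ` K \<subseteq> (\<lambda>f. proj n (port (E f))) ` Fun (Free n)"
      proof
        fix h assume "h \<in> proj n ` K"
        then obtain a where h: "h = proj n (port a)" and ga: "good a" by (auto simp: K_eq)
        define f where "f = (\<lambda>u. a u \<and> u \<in> Free n)"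
        have "f \<in> Fun (Free n)" by (auto simp: f_def Fun_def)
        moreover have "proj n (port (E f)) = h"
          unfolding h proj_port_eq_iff
        proof (intro allI impI)
          fix u :: "bool list" assume "length u < n"
          show "E f u = a u"
            by (rule unique[OF E_good ga _ \<open>length u < n\<close>]) (auto simp: E_free f_def Free_def)
        qed
        ultimately show "h \<in> (\<lambda>f. proj n (port (E f))) ` Fun (Free n)" by blast
      qed
    qed
  qed
  then have "card (proj n ` K) = card (Fun (Free n))" by (simp add: bij_betw_same_card)
  then show ?thesis by (simp add: card_Fun)
qed

end

lemma log2_pow: "log 2 (real ((2::nat) ^ k)) = real k"
  by (simp add: log_nat_power)

lemma ratio_lim:
  fixes D :: nat
  shows "(\<lambda>n. (1 - 1 / 2 ^ D + (1/2::real) ^ n) / (1 - (1/2) ^ n)) \<longlonglongrightarrow> 1 - 1 / 2 ^ D"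
proof -
  have "(\<lambda>n. (1 - 1 / 2 ^ D + (1/2::real) ^ n) / (1 - (1/2) ^ n)) \<longlonglongrightarrow> (1 - 1 / 2 ^ D + 0) / (1 - 0)"
    by (intro tendsto_intros) auto
  then show ?thesis by simp
qed

context fam begin

lemma ratio_eq:
  assumes n: "D + 1 \<le> n"
  shows "log 2 (real (card (proj n ` K))) / log 2 (real (card (AutD n)))
       = (1 - 1 / 2 ^ D + (1/2::real) ^ n) / (1 - (1/2) ^ n)"
proof -
  have c1: "(2::nat) \<le> 2 ^ (n - D)"
  proof -
    have "(2::nat) ^ 1 \<le> 2 ^ (n - D)" using n by (intro power_increasing) auto
    then show ?thesis by simp
  qed
  have c2: "(2::nat) ^ (n - D) \<le> 2 ^ n" by (intro power_increasing) auto
  have "real (card (Free n)) = 2 ^ n - 1 - (2 ^ (n - D) - 2)"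
  proof -
    have c3: "(2::nat) ^ (n - D) \<le> Suc (2 ^ n)" using c2 le_SucI by blast
    have "card (Free n) = Suc (2 ^ n) - 2 ^ (n - D)" using card_Free[OF n] c1 c2 by simp
    then show ?thesis using c1 c3 by (simp add: of_nat_diff)
  qed
  also have "(2::real) ^ (n - D) = 2 ^ n / 2 ^ D" using n by (simp add: power_diff)
  finally have cf: "real (card (Free n)) = 2 ^ n + 1 - 2 ^ n / 2 ^ D" by simp
  have ca: "real (2 ^ n - 1 :: nat) = 2 ^ n - 1" by (simp add: of_nat_diff)
  have lhs: "log 2 (real (card (proj n ` K))) / log 2 (real (card (AutD n)))
       = (2 ^ n + 1 - 2 ^ n / 2 ^ D) / (2 ^ n - 1)"
    unfolding card_projK card_AutD log2_pow cf ca ..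
  have p: "(1::real) < 2 ^ n" using n by (intro one_less_power) auto
  have q: "(1/2::real) ^ n = 1 / 2 ^ n" by (simp add: power_divide)
  show ?thesis unfolding lhs q using p
    by (simp add: field_simps)
qed

lemma Hdim_K: "Hdim K = ereal (1 - 1 / 2 ^ D)"
proof -
  have ev: "eventually (\<lambda>n. ereal (log 2 (real (card (proj n ` K))) / log 2 (real (card (AutD n))))
        = ereal ((1 - 1 / 2 ^ D + (1/2::real) ^ n) / (1 - (1/2) ^ n))) sequentially"
    using ratio_eq by (intro eventually_sequentiallyI[of "D+1"]) simp
  have "Hdim K = liminf (\<lambda>n. ereal ((1 - 1 / 2 ^ D + (1/2::real) ^ n) / (1 - (1/2) ^ n)))"
    unfolding Hdim_def by (rule Liminf_eq[OF ev])
  also have "\<dots> = ereal (1 - 1 / 2 ^ D)"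
    by (intro lim_imp_Liminf) (auto intro: tendsto_ereal ratio_lim)
  finally show ?thesis .
qed

end

lemma lam_or:
  assumes "\<And>u. \<not> (P u \<and> Q u)"
  shows "lam j (\<lambda>u. P u \<or> Q u) v = lam j P v + lam j Q v"
  unfolding lam_def using assms by (auto simp: sum.distrib[symmetric] intro!: sum.cong)

lemma lam_ind:
  "lam j (\<lambda>u. u = c) v = (if take (length v) c = v \<and> length c = length v + j then 1 else 0)"
proof (cases "take (length v) c = v \<and> length c = length v + j")
  case True
  then have c: "c = v @ drop (length v) c" by (metis append_take_drop_id)
  have "lam j (\<lambda>u. u = c) v = lam j (\<lambda>u. u = v @ drop (length v) c) v" using c by simp
  also have "\<dots> = (if length (drop (length v) c) = j then 1 else 0)" by (rule lam_single)
  finally show ?thesis using True by simp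
next
  case False
  have "lam j (\<lambda>u. u = c) v = (\<Sum>y\<in>W j. 0)"
    unfolding lam_def
  proof (rule sum.cong)
    fix y assume "y \<in> W j"
    then show "(if v @ y = c then 1 else 0) = (0::nat)" using False by (auto simp: W_def)
  qed simp
  then show ?thesis using False by simp
qed

lemma card_xor:
  assumes "finite B1" "finite B2"
  shows "odd (card {s \<in> (B1 - B2) \<union> (B2 - B1). P s}) = (odd (card {s\<in>B1. P s}) \<noteq> odd (card {s\<in>B2. P s}))"
proof -
  let ?X1 = "{s\<in>B1. P s}" and ?X2 = "{s\<in>B2. P s}"
  have f: "finite ?X1" "finite ?X2" using assms by auto
  have e: "{s \<in> (B1 - B2) \<union> (B2 - B1). P s} = (?X1 \<union> ?X2) - (?X1 \<inter> ?X2)" by auto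
  have c1: "card (?X1 \<union> ?X2) + card (?X1 \<inter> ?X2) = card ?X1 + card ?X2"
    using f by (rule card_Un_Int[symmetric])
  have c2: "card ((?X1 \<union> ?X2) - (?X1 \<inter> ?X2)) = card (?X1 \<union> ?X2) - card (?X1 \<inter> ?X2)"
    using f by (intro card_Diff_subset) auto
  have c3: "card (?X1 \<inter> ?X2) \<le> card (?X1 \<union> ?X2)" using f by (intro card_mono) auto
  show ?thesis unfolding e c2 using c1 c3 by presburger
qed

lemma par3: "even (a+b+x) \<Longrightarrow> even (x+y) \<Longrightarrow> even (a+b+(y::nat))" by presburger
lemma par4: "even (c+b+(a::nat)) \<Longrightarrow> odd c = (odd a \<noteq> odd b)" by presburger

context fam begin

definition M :: "(bool list \<Rightarrow> bool) \<Rightarrow> bool list \<Rightarrow> nat" where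
  "M a w = (\<Sum>j\<in>T. lam (j - 1) a w)"

lemma L_M: "L a v = M a (v@[False]) + M a (v@[True])"
proof -
  have "L a v = (\<Sum>j\<in>T. lam (j - 1) a (v@[False]) + lam (j - 1) a (v@[True]))"
    unfolding L_def
  proof (rule sum.cong)
    fix j assume "j \<in> T"
    then have "j = Suc (j - 1)" using TD by auto
    then show "lam j a v = lam (j - 1) a (v@[False]) + lam (j - 1) a (v@[True])"
      by (metis lam_Suc)
  qed simp
  then show ?thesis by (simp add: M_def sum.distrib)
qed

lemma M_comp: "even (M (comp_lab a b) w + M b w + M a (port b w))"
proof -
  have "M (comp_lab a b) w + M b w + M a (port b w) = (\<Sum>j\<in>T. lam (j-1) (comp_lab a b) w + lam (j-1) b w + lam (j-1) a (port b w))"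
    by (simp add: M_def sum.distrib)
  then show ?thesis by (auto intro!: dvd_sum lam_comp)
qed

definition mu :: "nat \<Rightarrow> (bool list \<Rightarrow> bool) \<Rightarrow> bool" where
  "mu i a = odd (\<Sum>v\<in>W i. M a (v@[False]))"

lemma mu_hom:
  assumes ga: "good a" and i: "1 \<le> i"
  shows "mu i (comp_lab a b) = (mu i a \<noteq> mu i b)"
proof -
  let ?Sc = "\<Sum>v\<in>W i. M (comp_lab a b) (v@[False])"
  let ?Sb = "\<Sum>v\<in>W i. M b (v@[False])"
  let ?Sa = "\<Sum>v\<in>W i. M a (v@[False])"
  let ?X = "\<Sum>v\<in>W i. M a (port b (v@[False]))"
  let ?Y = "\<Sum>v\<in>W i. M a (port b v @ [False])"
  have e1: "even (?Sc + ?Sb + ?X)"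
  proof -
    have "?Sc + ?Sb + ?X = (\<Sum>v\<in>W i. M (comp_lab a b) (v@[False]) + M b (v@[False]) + M a (port b (v@[False])))"
      by (simp add: sum.distrib)
    then show ?thesis by (auto intro!: dvd_sum M_comp)
  qed
  have e2: "even (?X + ?Y)"
  proof -
    have "even (M a (port b (v@[False])) + M a (port b v @ [False]))" if v: "v \<in> W i" for v
    proof (cases "b v")
      case False then show ?thesis by (simp add: port_snoc)
    next
      case True
      have "1 \<le> length (port b v)" using v i by (simp add: W_def)
      then have "port b v \<noteq> []" by (metis list.size(3) not_one_le_zero)
      then have "even (L a (port b v))" using ga by (auto simp: good_def)
      then show ?thesis using True by (simp add: port_snoc L_M add.commute)
    qed
    moreover have "?X + ?Y = (\<Sum>v\<in>W i. M a (port b (v@[False])) + M a (port b v @ [False]))"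
      by (simp add: sum.distrib)
    ultimately show ?thesis by (auto intro!: dvd_sum)
  qed
  have e3: "?Y = ?Sa"
    by (rule sum.reindex_bij_betw[OF port_bij_W, of "\<lambda>w. M a (w @ [False])"])
  have "even (?Sc + ?Sb + ?Sa)" using par3[OF e1 e2] unfolding e3 .
  then show ?thesis unfolding mu_def by (rule par4)
qed

lemma mu_zero: "mu i (\<lambda>_. False) = False"
  by (simp add: mu_def M_def)

lemma mu_dep:
  assumes "\<And>u. length u < n \<Longrightarrow> a u = a' u" "i + D < n"
  shows "mu i a = mu i a'"
proof -
  have "M a (v@[False]) = M a' (v@[False])" if "v \<in> W i" for v
    unfolding M_def
  proof (intro sum.cong refl lam_cong)
    fix j and y :: "bool list" assume "j \<in> T" "length y = j - 1"
    then have "length ((v@[False])@y) < n" using that assms(2) TD by (auto simp: W_def)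
    then show "a ((v@[False])@y) = a' ((v@[False])@y)" using assms(1) by blast
  qed
  then show ?thesis unfolding mu_def by (metis (no_types, lifting) sum.cong)
qed

definition t0 :: nat where "t0 = Min T - 1"

lemma t0_le: "j \<in> T \<Longrightarrow> t0 + 1 \<le> j"
proof -
  assume "j \<in> T"
  then have "Min T \<le> j" by simp
  moreover have "1 \<le> Min T" using TD DT by (subst Min_ge_iff) auto
  ultimately show ?thesis by (simp add: t0_def)
qed

lemma t0_in: "t0 + 1 \<in> T"
proof -
  have "Min T \<in> T" using DT by (intro Min_in) auto
  moreover have "1 \<le> Min T" using TD DT by (subst Min_ge_iff) auto
  ultimately show ?thesis by (simp add: t0_def)
qed

definition Ael :: "nat \<Rightarrow> bool \<Rightarrow> bool list" where
  "Ael i0 x = replicate i0 False @ x # replicate t0 False"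

definition ea :: "nat \<Rightarrow> bool list \<Rightarrow> bool" where
  "ea i0 = (\<lambda>u. u = Ael i0 False \<or> u = Ael i0 True)"

lemma lam_ea: "lam k (ea i0) w = lam k (\<lambda>u. u = Ael i0 False) w + lam k (\<lambda>u. u = Ael i0 True) w"
  unfolding ea_def by (rule lam_or) (auto simp: Ael_def)

lemma lam_A_eq:
  assumes "t0 + 1 \<le> k"
  shows "lam k (\<lambda>u. u = Ael i0 False) w = lam k (\<lambda>u. u = Ael i0 True) w"
proof (cases "length w \<le> i0")
  case True
  have "take (length w) (Ael i0 x) = take (length w) (replicate i0 False)" for x
    using True by (simp add: Ael_def)
  then show ?thesis unfolding lam_ind by (simp add: Ael_def)
next
  case False
  then show ?thesis unfolding lam_ind using assms by (simp add: Ael_def)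
qed

lemma ea_good: "good (ea i0)"
  unfolding good_def
proof (intro allI impI)
  fix v :: "bool list"
  have "even (lam j (ea i0) v)" if "j \<in> T" for j
    using lam_A_eq[OF t0_le[OF that], of i0 v] by (simp add: lam_ea)
  then show "even (L (ea i0) v)" unfolding L_def by (auto intro!: dvd_sum)
qed

lemma lam_A_t0:
  assumes "length v = i"
  shows "lam t0 (\<lambda>u. u = Ael i0 x) (v@[False]) = (if i = i0 \<and> v = replicate i0 False \<and> x = False then 1 else 0)"
proof -
  have "take (Suc i0) (Ael i0 x) = replicate i0 False @ [x]" by (simp add: Ael_def)
  then show ?thesis unfolding lam_ind using assms by (auto simp: Ael_def)
qed

lemma mu_ea: assumes "1 \<le> i" shows "mu i (ea i0) = (i = i0)"
proof -
  define t1 where "t1 = t0 + 1"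
  have t1T: "t1 \<in> T" using t0_in by (simp add: t1_def)
  have "M (ea i0) (v@[False]) = lam t0 (ea i0) (v@[False]) + (\<Sum>j\<in>T - {t1}. lam (j - 1) (ea i0) (v@[False]))" for v
    unfolding M_def using t1T by (simp add: sum.remove t1_def)
  moreover have "even (\<Sum>j\<in>T - {t1}. lam (j - 1) (ea i0) w)" for w
  proof (intro dvd_sum)
    fix j assume j: "j \<in> T - {t1}"
    then have "t0 + 1 \<le> j - 1" using t0_le[of j] by (auto simp: t1_def)
    then show "even (lam (j - 1) (ea i0) w)" using lam_A_eq[of "j - 1" i0 w] by (simp add: lam_ea)
  qed
  ultimately have ev: "even (M (ea i0) (v@[False]) + (if length v = i0 \<and> v = replicate i0 False then 1 else 0))" if "v \<in> W i" for v
    using that by (simp add: lam_ea lam_A_t0[of v i] W_def)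
  have "even ((\<Sum>v\<in>W i. M (ea i0) (v@[False])) + (\<Sum>v\<in>W i. if length v = i0 \<and> v = replicate i0 False then 1 else 0))"
    unfolding sum.distrib[symmetric] using ev by (auto intro!: dvd_sum)
  moreover have "(\<Sum>v\<in>W i. if length v = i0 \<and> v = replicate i0 False then 1 else (0::nat)) = (if i = i0 then 1 else 0)"
  proof (cases "i = i0")
    case True
    have "(\<Sum>v\<in>W i. if length v = i0 \<and> v = replicate i0 False then 1 else (0::nat)) = (\<Sum>v\<in>W i. if v = replicate i0 False then 1 else 0)"
      by (intro sum.cong) (auto simp: W_def)
    also have "\<dots> = 1" using True by (simp add: W_def)
    finally show ?thesis using True by simp
  next
    case False
    then show ?thesis by (intro trans[OF sum.neutral]) (auto simp: W_def)
  qed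
  ultimately show ?thesis unfolding mu_def by (cases "i = i0") auto
qed

end

lemma inj_mem: "inj (\<lambda>B (i::nat). i \<in> B)"
proof (rule injI)
  fix B1 B2 :: "nat set" assume h: "(\<lambda>i. i \<in> B1) = (\<lambda>i. i \<in> B2)"
  have "\<And>i. (i \<in> B1) = (i \<in> B2)" using fun_cong[OF h] by simp
  then show "B1 = B2" by (intro set_eqI) simp
qed

context fam begin

lemma lab_comp: "lab (port a \<circ> port b) = comp_lab a b"
  by (simp add: port_comp)

lemma mu_grp:
  assumes "g \<in> K" "h \<in> K" "1 \<le> i"
  shows "mu i (lab (g \<circ> h)) = (mu i (lab g) \<noteq> mu i (lab h))"
proof -
  obtain a b where g: "g = port a" "good a" and h: "h = port b" "good b"
    using assms unfolding K_eq by blast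
  show ?thesis using mu_hom[OF g(2) assms(3), of b] by (simp add: g h lab_comp)
qed

lemma mu_id: "mu i (lab id) = False"
  by (simp add: port_id[symmetric] mu_zero)

lemma mu_inv:
  assumes "g \<in> K" "1 \<le> i"
  shows "mu i (lab (inv g)) = mu i (lab g)"
proof -
  have ig: "inv g \<in> K" using K_inv assms by blast
  obtain a where ga: "g = port a" using assms K_AutT unfolding AutT_eq by blast
  have "g \<circ> inv g = id" unfolding ga using port_bij[of a] surj_iff bij_is_surj by blast
  then have "mu i (lab (g \<circ> inv g)) = False" by (simp add: mu_id)
  then show ?thesis using mu_grp[OF assms(1) ig assms(2)] by simp
qed

lemma not_tfg: "\<not> top_fin_gen K"
proof
  assume "top_fin_gen K"
  then obtain S where fS: "finite S" and SK: "S \<subseteq> K" and HK: "gen_subgroup S \<subseteq> K"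
    and dense: "dense_in (gen_subgroup S) K" unfolding top_fin_gen_def by blast
  define N where "N = card S + 1"
  define vec where "vec = (\<lambda>g i. 1 \<le> i \<and> i \<le> N \<and> mu i (lab g))"
  define xs where "xs = (\<lambda>B i. odd (card {s\<in>B. vec s i}))"
  have vcomp: "vec (p \<circ> q) = (\<lambda>i. vec p i \<noteq> vec q i)" if "p \<in> K" "q \<in> K" for p q
    using mu_grp[OF that] by (auto simp: vec_def intro!: ext)
  have vinv: "vec (inv p) = vec p" if "p \<in> K" for p
    using mu_inv[OF that] by (auto simp: vec_def intro!: ext)
  have vid: "vec id = (\<lambda>i. False)" by (simp add: vec_def mu_id)
  have claim1: "\<exists>B\<subseteq>S. vec h = xs B" if "h \<in> gen_subgroup S" for h
    using that
  proof (induct rule: gen_subgroup.induct)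
    case gen_id
    have "vec (\<lambda>a. a) = (\<lambda>i. False)" using vid by (simp add: id_def)
    then show ?case by (intro exI[of _ "{}"]) (simp add: xs_def id_def)
  next
    case (gen_base s)
    have "{s'\<in>{s}. vec s' i} = (if vec s i then {s} else {})" for i by auto
    then have "xs {s} = vec s" by (auto simp: xs_def intro!: ext)
    then show ?case using gen_base by (intro exI[of _ "{s}"]) auto
  next
    case (gen_comp p q)
    obtain B1 where B1: "B1 \<subseteq> S" "vec p = xs B1" using gen_comp(2) by blast
    obtain B2 where B2: "B2 \<subseteq> S" "vec q = xs B2" using gen_comp(4) by blast
    have B: "B1 \<subseteq> S" "vec p = xs B1" "B2 \<subseteq> S" "vec q = xs B2" using B1 B2 by simp_all
    have pq: "p \<in> K" "q \<in> K" using gen_comp(1) gen_comp(3) HK by (simp_all add: subset_iff)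
    have fB: "finite B1" "finite B2" using finite_subset[OF B1(1) fS] finite_subset[OF B2(1) fS] by simp_all
    show ?case
    proof (intro exI[of _ "(B1 - B2) \<union> (B2 - B1)"] conjI)
      show "(B1 - B2) \<union> (B2 - B1) \<subseteq> S" using B by auto
      show "vec (p \<circ> q) = xs ((B1 - B2) \<union> (B2 - B1))"
        unfolding vcomp[OF pq] B(2) B(4) xs_def
      proof (rule ext)
        fix i show "(odd (card {s \<in> B1. vec s i}) \<noteq> odd (card {s \<in> B2. vec s i})) = odd (card {s \<in> B1 - B2 \<union> (B2 - B1). vec s i})"
          using card_xor[OF fB, of "\<lambda>s. vec s i"] by simp
      qed
    qed
  next
    case (gen_inv p)
    obtain B where B: "B \<subseteq> S" "vec p = xs B" using gen_inv(2) by blast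
    have pK: "p \<in> K" using gen_inv(1) HK by (simp add: subset_iff)
    show ?case using B vinv[OF pK] by (intro exI[of _ B]) simp
  qed
  define n0 where "n0 = N + D + 1"
  have claim2: "vec k \<in> xs ` Pow S" if kK: "k \<in> K" for k
  proof -
    have dd: "\<forall>n. \<exists>h\<in>gen_subgroup S. proj n h = proj n k" using dense kK unfolding dense_in_def by blast
    obtain h where h: "h \<in> gen_subgroup S" "proj n0 h = proj n0 k" using dd by blast
    have hK: "h \<in> K" using h(1) HK by (simp add: subset_iff)
    obtain a where ha: "h = port a" using hK K_AutT unfolding AutT_eq by blast
    obtain b where kb: "k = port b" using kK K_AutT unfolding AutT_eq by blast
    have ag: "\<And>u. length u < n0 \<Longrightarrow> a u = b u" using h(2) unfolding ha kb proj_port_eq_iff by blast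
    have "vec h = vec k"
    proof
      fix i
      show "vec h i = vec k i"
      proof (cases "i \<le> N")
        case True
        then have "i + D < n0" by (simp add: n0_def)
        then have "mu i a = mu i b" using mu_dep[of n0 a b i] ag by blast
        then show ?thesis unfolding vec_def ha kb by simp
      next
        case False
        then show ?thesis unfolding vec_def by simp
      qed
    qed
    obtain B where "B \<subseteq> S" "vec h = xs B" using claim1[OF h(1)] by blast
    then show ?thesis using \<open>vec h = vec k\<close> by auto
  qed
  have claim3: "(\<lambda>i. i \<in> B) \<in> vec ` K" if BN: "B \<subseteq> {1..N}" for B
  proof -
    have "finite B" using finite_subset[OF BN] by simp
    then show ?thesis using BN
    proof (induct B rule: finite_induct)
      case empty
      have v0: "(\<lambda>i. i \<in> {}) = vec id" using vid by simp
      show ?case by (rule image_eqI[of _ vec id, OF v0 K_id])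
    next
      case (insert i0 B)
      have "B \<subseteq> {1..N}" using insert(4) by simp
      then have "(\<lambda>i. i \<in> B) \<in> vec ` K" using insert(3) by simp
      then obtain k where k: "k \<in> K" "vec k = (\<lambda>i. i \<in> B)" by (auto elim!: imageE)
      have i0: "1 \<le> i0" "i0 \<le> N" using insert(4) by auto
      have e: "port (ea i0) \<in> K" by (simp add: K_port ea_good)
      have ve: "vec (port (ea i0)) = (\<lambda>i. i = i0)"
      proof
        fix i show "vec (port (ea i0)) i = (i = i0)"
        proof (cases "1 \<le> i \<and> i \<le> N")
          case True then show ?thesis unfolding vec_def using mu_ea[of i i0] by simp
        next
          case False then show ?thesis unfolding vec_def using i0 by auto
        qed
      qed
      have "vec (k \<circ> port (ea i0)) = (\<lambda>i. (i \<in> B) \<noteq> (i = i0))"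
        unfolding vcomp[OF k(1) e] k(2) ve ..
      also have "\<dots> = (\<lambda>i. i \<in> insert i0 B)" using insert(2) by (auto intro!: ext)
      finally have "vec (k \<circ> port (ea i0)) = (\<lambda>i. i \<in> insert i0 B)" .
      moreover have "k \<circ> port (ea i0) \<in> K" using K_comp k(1) e by blast
      ultimately show ?case by (intro image_eqI[of _ vec "k \<circ> port (ea i0)"]) simp_all
    qed
  qed
  have sub: "(\<lambda>B i. i \<in> B) ` Pow {1..N} \<subseteq> xs ` Pow S"
  proof
    fix f assume "f \<in> (\<lambda>B i. i \<in> B) ` Pow {1..N}"
    then obtain B where B: "f = (\<lambda>i. i \<in> B)" "B \<in> Pow {1..N}" by (rule imageE)
    have "(\<lambda>i. i \<in> B) \<in> vec ` K" using B(2) by (intro claim3) simp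
    then obtain k where k: "(\<lambda>i. i \<in> B) = vec k" "k \<in> K" by (rule imageE)
    show "f \<in> xs ` Pow S" unfolding B(1) k(1) by (rule claim2[OF k(2)])
  qed
  have inj: "inj_on (\<lambda>B i. i \<in> B) (Pow {1..N::nat})"
    by (rule inj_on_subset[OF inj_mem]) simp
  have "card ((\<lambda>B i. i \<in> B) ` Pow {1..N}) = card (Pow {1..N::nat})"
    by (rule card_image[OF inj])
  also have "\<dots> = 2 ^ N" by (simp add: card_Pow)
  finally have c1: "card ((\<lambda>B i. i \<in> B) ` Pow {1..N}) = 2 ^ N" .
  have "card (xs ` Pow S) \<le> card (Pow S)" using fS by (intro card_image_le) simp
  also have "\<dots> = 2 ^ card S" using fS by (simp add: card_Pow)
  finally have c2: "card (xs ` Pow S) \<le> 2 ^ card S" .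
  have "card ((\<lambda>B i. i \<in> B) ` Pow {1..N}) \<le> card (xs ` Pow S)"
    using sub fS by (intro card_mono) auto
  then have "(2::nat) ^ N \<le> card (xs ` Pow S)" unfolding c1 .
  then have "(2::nat) ^ N \<le> 2 ^ card S" using c2 by (rule order_trans)
  moreover have "(2::nat) ^ card S < 2 ^ N" unfolding N_def by (intro power_strict_increasing) auto
  ultimately show False by linarith
qed

end

context fam begin

lemma L_r:
  assumes r: "1 \<le> r" "r < D" and a: "\<And>u. length u \<le> D \<Longrightarrow> a u = (u = [False] @ replicate r False)"
  shows "L a [False] = (if r \<in> T then 1 else 0) + lam D a [False]"
proof -
  have "L a [False] = lam D a [False] + (\<Sum>j\<in>T - {D}. lam j a [False])"
    unfolding L_def using DT by (simp add: sum.remove)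
  also have "(\<Sum>j\<in>T - {D}. lam j a [False]) = (\<Sum>j\<in>T - {D}. if r = j then 1 else 0)"
  proof (rule sum.cong)
    fix j assume j: "j \<in> T - {D}"
    then have jD: "j < D" using TD by fastforce
    have "lam j a [False] = lam j (\<lambda>u. u = [False] @ replicate r False) [False]"
      by (rule lam_cong) (use jD a in auto)
    also have "\<dots> = (if length (replicate r False) = j then 1 else 0)" by (rule lam_single)
    finally show "lam j a [False] = (if r = j then 1 else 0)" by simp
  qed simp
  also have "\<dots> = (if r \<in> T - {D} then 1 else 0)" by (simp add: sum.delta)
  also have "\<dots> = (if r \<in> T then 1 else 0)" using r by auto
  finally show ?thesis by simp
qed

end

lemma fam_distinct:
  assumes A: "fam D T" and B: "fam D T'" and ne: "T \<noteq> T'"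
  shows "fam.K D T \<noteq> fam.K D T'"
proof -
  interpret A: fam D T by (rule A)
  interpret B: fam D T' by (rule B)
  obtain r where r: "r \<in> (T - T') \<union> (T' - T)" using ne by blast
  have rD: "r \<noteq> D" using r A.DT B.DT by auto
  have r1: "1 \<le> r" "r \<le> D" using r A.TD B.TD by auto
  then have r2: "r < D" using rD by simp
  define f where "f = (\<lambda>u. u = [False] @ replicate r False)"
  define a where "a = A.E f"
  have ag: "A.good a" unfolding a_def by (rule A.E_good)
  have aa: "\<And>u. length u \<le> D \<Longrightarrow> a u = (u = [False] @ replicate r False)"
    unfolding a_def by (simp add: A.E_agree f_def)
  have LA: "A.L a [False] = (if r \<in> T then 1 else 0) + lam D a [False]"
    by (rule A.L_r[OF r1(1) r2 aa])
  have LB: "B.L a [False] = (if r \<in> T' then 1 else 0) + lam D a [False]"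
    by (rule B.L_r[OF r1(1) r2 aa])
  have "even (A.L a [False])" using ag by (auto simp: A.good_def)
  then have "odd (B.L a [False])" using LA LB r by (auto split: if_splits)
  then have "\<not> B.good a" unfolding B.good_def by (metis list.distinct(1))
  then have "port a \<notin> B.K" by (simp add: B.K_port)
  moreover have "port a \<in> A.K" using ag by (simp add: A.K_port)
  ultimately show ?thesis by blast
qed

lemma card_Ts:
  assumes "1 \<le> D"
  shows "card {T. T \<subseteq> {1..D} \<and> D \<in> T} = 2 ^ (D - 1)"
proof -
  have "bij_betw (\<lambda>T. T - {D}) {T. T \<subseteq> {1..D} \<and> D \<in> T} (Pow {1..<D})"
  proof (rule bij_betw_byWitness[where f'="insert D"])
    show "\<forall>T\<in>{T. T \<subseteq> {1..D} \<and> D \<in> T}. insert D (T - {D}) = T" by auto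
    show "\<forall>T\<in>Pow {1..<D}. insert D T - {D} = T" by auto
    show "(\<lambda>T. T - {D}) ` {T. T \<subseteq> {1..D} \<and> D \<in> T} \<subseteq> Pow {1..<D}" by auto
    show "insert D ` Pow {1..<D} \<subseteq> {T. T \<subseteq> {1..D} \<and> D \<in> T}" using assms by auto
  qed
  then have "card {T. T \<subseteq> {1..D} \<and> D \<in> T} = card (Pow {1..<D})" by (rule bij_betw_same_card)
  then show ?thesis by (simp add: card_Pow)
qed

theorem mainTheorem16:
  fixes d :: nat
  assumes "d \<ge> 4"
  shows "\<exists>F. finite F \<and> 2 ^ (d - 3) \<le> card F \<and>
    (\<forall>K\<in>F. finitely_constrained K \<and> defined_by_patterns_of_size d K
       \<and> Hdim K = ereal (1 - 2 / 2 ^ (d - 1)) \<and> \<not> top_fin_gen K)"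
proof -
  define D where "D = d - 2"
  have D1: "1 \<le> D" using assms by (simp add: D_def)
  have dD: "d = D + 2" using assms by (simp add: D_def)
  define Ts where "Ts = {T. T \<subseteq> {1..D} \<and> D \<in> T}"
  have famT: "fam D T" if "T \<in> Ts" for T
    using that D1 unfolding Ts_def by unfold_locales auto
  define F where "F = (\<lambda>T. fam.K D T) ` Ts"
  have finTs: "finite Ts" unfolding Ts_def
    by (rule finite_subset[of _ "Pow {1..D}"]) auto
  have inj: "inj_on (\<lambda>T. fam.K D T) Ts"
    by (rule inj_onI) (use fam_distinct famT in blast)
  have "card F = card Ts" unfolding F_def using card_image[OF inj] by simp
  then have cF: "card F = 2 ^ (D - 1)" using card_Ts[OF D1] by (simp add: Ts_def)
  have "d - 3 = D - 1" by (simp add: dD)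
  then have c: "2 ^ (d - 3) \<le> card F" using cF by simp
  have props: "finitely_constrained K \<and> defined_by_patterns_of_size d K
       \<and> Hdim K = ereal (1 - 2 / 2 ^ (d - 1)) \<and> \<not> top_fin_gen K" if KF: "K \<in> F" for K
  proof -
    obtain T where T: "T \<in> Ts" "K = fam.K D T" using KF unfolding F_def by blast
    interpret fam D T by (rule famT[OF T(1)])
    have e: "(2::real) / 2 ^ (d - 1) = 1 / 2 ^ D"
      by (simp add: dD)
    show ?thesis unfolding T(2) dD using K_fc K_defined Hdim_K not_tfg e dD by simp
  qed
  show ?thesis using finTs c props unfolding F_def by blast
qed

end
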